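(* As $q$-series with coefficients reduced modulo $2$, $$\sum_{n\ge0}\mathcal{F}^*_6(4n)q^n\equiv\frac{(q;q)_\infty^3}{(q^3;q^3)_\infty^3}\pmod 2\qquad\text{and}\qquad \sum_{n\ge0}\mathcal{F}^*_6(8n+2)q^n\equiv (q;q)_\infty^3\pmod 2.$$
   Context: Let $(a;q)_\infty=\prod_{j\ge0}(1-aq^j)$. Define the integers $\mathcal{F}^*_6(n)$ by $$\sum_{n\ge0}\mathcal{F}^*_6(n)q^n=\left(\frac{(q;q)_\infty(q^3;q^3)_\infty}{(q^2;q^2)_\infty(q^6;q^6)_\infty}\right)^6.$$ *)

theory Defs
  imports "HOL-Computational_Algebra.Formal_Power_Series" "HOL-Number_Theory.Cong"
begin

text \<open>(q^k;q^k)_infinity as an integer formal power series: its n-th coefficient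
  agrees with that of the finite product over j = 1..n of (1 - q^(k j)), since
  the remaining factors (k j > n, for k >= 1) do not affect coefficient n.\<close>
definition qpoch :: "nat \<Rightarrow> int fps" where
  "qpoch k = Abs_fps (\<lambda>n. fps_nth (\<Prod>j\<in>{1..n}. (1 - fps_X ^ (k * j))) n)"

definition finv :: "int fps \<Rightarrow> int fps" where
  "finv g = fps_right_inverse g 1"

definition Fstar6_series :: "int fps" where
  "Fstar6_series = (qpoch 1 * qpoch 3 * finv (qpoch 2 * qpoch 6)) ^ 6"

definition Fstar6 :: "nat \<Rightarrow> int" where
  "Fstar6 n = fps_nth Fstar6_series n"

end

theory Submission
  imports Defs "HOL-Library.Z2"
begin
unbundle fps_syntax


lemma bit_of_int: "(of_int k :: bit) = (if even k then 0 else 1)"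
proof -
  have "(of_int k :: bit) = of_int (k div 2) * 2 + of_int (k mod 2)"
    by (metis div_mult_mod_eq of_int_add of_int_mult of_int_numeral)
  then have "(of_int k :: bit) = of_int (k mod 2)" by simp
  then show ?thesis
    by (cases "even k") (auto simp: even_iff_mod_2_eq_zero odd_iff_mod_2_eq_one)
qed

lemma cong2_bit: "[x = y] (mod 2) \<longleftrightarrow> (of_int x :: bit) = of_int y"
  unfolding cong_def bit_of_int
  by (auto simp: even_iff_mod_2_eq_zero odd_iff_mod_2_eq_one)

lemma bit_add_self [simp]: "(x::bit) + x = 0"
  by (metis bit_2_eq_0 mult_2 mult_zero_left)

lemma bit_of_nat: "(of_nat k :: bit) = (if even k then 0 else 1)"
  using bit_of_int[of "int k"] by simp

definition hm :: "int fps \<Rightarrow> bit fps" where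
  "hm f = Abs_fps (\<lambda>n. of_int (f $ n))"

lemma hm_nth [simp]: "hm f $ n = of_int (f $ n)"
  by (simp add: hm_def)

lemma hm_mult: "hm (f * g) = hm f * hm g"
  by (rule fps_ext) (simp add: fps_mult_nth)

lemma hm_add: "hm (f + g) = hm f + hm g"
  by (rule fps_ext) simp

lemma hm_diff: "hm (f - g) = hm f - hm g"
  by (rule fps_ext) simp

lemma hm_one [simp]: "hm 1 = 1"
  by (rule fps_ext) simp

lemma hm_X [simp]: "hm fps_X = fps_X"
  by (rule fps_ext) (simp add: fps_X_def)

lemma hm_power: "hm (f ^ n) = hm f ^ n"
  by (induction n) (simp_all add: hm_mult)

lemma hm_prod: "hm (prod F S) = prod (\<lambda>i. hm (F i)) S"
  by (induction S rule: infinite_finite_induct) (simp_all add: hm_mult)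

lemma hm_finv:
  assumes "g $ 0 = 1"
  shows "hm (finv g) = inverse (hm g)"
proof -
  have "g * finv g = 1" unfolding finv_def using assms by (simp add: fps_right_inverse)
  then have "hm g * hm (finv g) = 1" by (metis hm_mult hm_one)
  moreover have "hm g $ 0 \<noteq> 0" using assms by simp
  ultimately show ?thesis
    by (metis fps_inverse_unique mult.commute)
qed



lemma sum_involution_bit:
  fixes g :: "'a \<Rightarrow> bit"
  assumes "finite S" "\<And>x. x \<in> S \<Longrightarrow> \<sigma> x \<in> S" "\<And>x. x \<in> S \<Longrightarrow> \<sigma> (\<sigma> x) = x"
    "\<And>x. x \<in> S \<Longrightarrow> g (\<sigma> x) = g x"
  shows "sum g S = sum g {x\<in>S. \<sigma> x = x}"
  using assms
proof (induction "card S" arbitrary: S rule: less_induct)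
  case less
  note fS = less.prems(1) and cS = less.prems(2) and iS = less.prems(3) and gS = less.prems(4)
  show ?case
  proof (cases "\<exists>x\<in>S. \<sigma> x \<noteq> x")
    case False
    then have "{x\<in>S. \<sigma> x = x} = S" by auto
    then show ?thesis by simp
  next
    case True
    then obtain x where x: "x \<in> S" "\<sigma> x \<noteq> x" by auto
    define S' where "S' = S - {x, \<sigma> x}"
    have sx: "\<sigma> x \<in> S" using cS x by blast
    have fin: "finite S'" using fS by (simp add: S'_def)
    have card: "card S' < card S" unfolding S'_def using fS x sx
      by (metis Diff_insert2 card_Diff2_less[OF fS x(1) sx])
    have cl: "\<And>y. y \<in> S' \<Longrightarrow> \<sigma> y \<in> S'"
    proof -
      fix y assume y: "y \<in> S'"
      then have "y \<in> S" "y \<noteq> x" "y \<noteq> \<sigma> x" by (auto simp: S'_def)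
      then have "\<sigma> y \<noteq> \<sigma> x" "\<sigma> y \<noteq> x" using iS x(1) by metis+
      then show "\<sigma> y \<in> S'" using cS \<open>y \<in> S\<close> by (simp add: S'_def)
    qed
    have IH: "sum g S' = sum g {y\<in>S'. \<sigma> y = y}"
    proof (rule less.hyps[OF card fin cl])
      show "\<And>y. y \<in> S' \<Longrightarrow> \<sigma> (\<sigma> y) = y" using iS by (simp add: S'_def)
      show "\<And>y. y \<in> S' \<Longrightarrow> g (\<sigma> y) = g y" using gS by (simp add: S'_def)
    qed
    have sub: "{x, \<sigma> x} \<subseteq> S" using x sx by blast
    have "sum g S = sum g S' + sum g {x, \<sigma> x}"
      unfolding S'_def using sum.subset_diff[OF sub fS] .
    also have "sum g {x, \<sigma> x} = 0" using x gS by simp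
    finally have "sum g S = sum g S'" by simp
    moreover have "{y\<in>S'. \<sigma> y = y} = {y\<in>S. \<sigma> y = y}"
      unfolding S'_def using x(2) iS x(1) by auto
    ultimately show ?thesis using IH by simp
  qed
qed



definition dil :: "nat \<Rightarrow> 'a::zero fps \<Rightarrow> 'a fps" where
  "dil k f = Abs_fps (\<lambda>n. if k dvd n then f $ (n div k) else 0)"

lemma dil_nth: "dil k f $ n = (if k dvd n then f $ (n div k) else 0)"
  by (simp add: dil_def)

lemma dil_nth_mult [simp]: "0 < k \<Longrightarrow> dil k f $ (k * n) = f $ n"
  by (simp add: dil_def)

lemma sum_dvd_reindex:
  fixes F :: "nat \<Rightarrow> 'a::comm_monoid_add"
  assumes "0 < k"
  shows "(\<Sum>i=0..k*m. if k dvd i then F i else 0) = (\<Sum>i=0..m. F (k*i))"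
proof -
  have "(\<Sum>i=0..k*m. if k dvd i then F i else 0) = (\<Sum>i\<in>{i\<in>{0..k*m}. k dvd i}. F i)"
    by (rule sum.inter_filter[symmetric]) simp
  also have "{i\<in>{0..k*m}. k dvd i} = (\<lambda>i. k*i) ` {0..m}"
    using assms by (auto simp: image_iff dvd_def)
  also have "(\<Sum>i\<in>(\<lambda>i. k*i) ` {0..m}. F i) = (\<Sum>i=0..m. F (k*i))"
    using assms by (subst sum.reindex) (auto simp: inj_on_def)
  finally show ?thesis .
qed

lemma dil_mult:
  fixes f g :: "'a::comm_ring_1 fps"
  assumes "0 < k"
  shows "dil k (f * g) = dil k f * dil k g"
proof (rule fps_ext)
  fix n
  show "dil k (f * g) $ n = (dil k f * dil k g) $ n"
  proof (cases "k dvd n")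
    case False
    have "(dil k f * dil k g) $ n = (\<Sum>i=0..n. dil k f $ i * dil k g $ (n - i))"
      by (simp add: fps_mult_nth)
    also have "\<dots> = 0"
    proof (rule sum.neutral, clarify)
      fix i assume "i \<in> {0..n}"
      then have "\<not> (k dvd i \<and> k dvd (n - i))" using False
        by (metis atLeastAtMost_iff dvd_add le_add_diff_inverse)
      then show "dil k f $ i * dil k g $ (n - i) = 0" by (auto simp: dil_nth)
    qed
    finally show ?thesis using False by (simp add: dil_nth)
  next
    case True
    then obtain m where m: "n = k * m" by (auto simp: dvd_def)
    have "(dil k f * dil k g) $ n = (\<Sum>i=0..k*m. dil k f $ i * dil k g $ (k*m - i))"
      by (simp add: fps_mult_nth m)
    also have "\<dots> = (\<Sum>i=0..k*m. if k dvd i then f $ (i div k) * g $ ((k*m - i) div k) else 0)"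
    proof (rule sum.cong[OF refl])
      fix i assume i: "i \<in> {0..k*m}"
      show "dil k f $ i * dil k g $ (k*m - i) = (if k dvd i then f $ (i div k) * g $ ((k*m - i) div k) else 0)"
      proof (cases "k dvd i")
        case True
        then have "k dvd (k*m - i)" by (simp add: dvd_diff_nat)
        then show ?thesis using True by (simp add: dil_nth)
      qed (simp add: dil_nth)
    qed
    also have "\<dots> = (\<Sum>i=0..m. f $ i * g $ ((k*m - k*i) div k))"
      using sum_dvd_reindex[OF assms, of "\<lambda>i. f $ (i div k) * g $ ((k*m - i) div k)" m] assms by simp
    also have "\<dots> = (\<Sum>i=0..m. f $ i * g $ (m - i))"
      using assms by (simp add: right_diff_distrib'[symmetric])
    also have "\<dots> = (f * g) $ m" by (simp add: fps_mult_nth)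
    finally show ?thesis using m assms by simp
  qed
qed

lemma dil_one [simp]: "0 < k \<Longrightarrow> dil k (1::'a::comm_ring_1 fps) = 1"
  by (rule fps_ext) (auto simp: dil_nth)

lemma dil_add: "dil k (f + g :: 'a::monoid_add fps) = dil k f + dil k g"
  by (rule fps_ext) (auto simp: dil_nth)

lemma dil_power: "0 < k \<Longrightarrow> dil k ((f::'a::comm_ring_1 fps) ^ n) = dil k f ^ n"
  by (induction n) (simp_all add: dil_mult)

lemma dil_dil: "0 < k \<Longrightarrow> 0 < l \<Longrightarrow> dil k (dil l f) = dil (k*l) f"
proof (rule fps_ext)
  fix n assume kl: "0 < k" "0 < l"
  show "dil k (dil l f) $ n = dil (k*l) f $ n"
  proof (cases "k dvd n")
    case True
    then obtain m where m: "n = k * m" by (auto simp: dvd_def)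
    have "(k * l dvd k * m) = (l dvd m)" using kl by simp
    then show ?thesis using kl m by (simp add: dil_nth div_mult2_eq)
  next
    case False
    then have "\<not> k * l dvd n" using dvd_mult_left by blast
    then show ?thesis using False by (simp add: dil_nth)
  qed
qed

lemma dil_inverse:
  fixes f :: "'a::field fps"
  assumes "0 < k" "f $ 0 \<noteq> 0"
  shows "dil k (inverse f) = inverse (dil k f)"
proof -
  have "dil k f * dil k (inverse f) = 1"
    using assms by (simp add: dil_mult[symmetric] inverse_mult_eq_1')
  moreover have "dil k f $ 0 \<noteq> 0" using assms by (simp add: dil_nth)
  ultimately show ?thesis by (metis fps_inverse_unique)
qed

lemma bit_sq [simp]: "(x::bit) * x = x"
  by (metis bit_not_zero_iff mult_1 mult_zero_left)

lemma frob: "(f::bit fps) ^ 2 = dil 2 f"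
proof (rule fps_ext)
  fix n
  have "(f ^ 2) $ n = (\<Sum>i=0..n. f $ i * f $ (n - i))"
    by (simp add: power2_eq_square fps_mult_nth)
  also have "\<dots> = (\<Sum>i\<in>{i\<in>{0..n}. n - i = i}. f $ i * f $ (n - i))"
    by (rule sum_involution_bit) (auto simp: mult.commute)
  also have "\<dots> = dil 2 f $ n"
  proof (cases "even n")
    case True
    then have "{i\<in>{0..n}. n - i = i} = {n div 2}" by auto
    moreover have "n - n div 2 = n div 2" using True by auto
    ultimately show ?thesis using True by (simp del: mult_bit_eq_and add: dil_nth)
  next
    case False
    have "\<And>i. i \<le> n \<Longrightarrow> n - i = i \<Longrightarrow> n = 2 * i" by arith
    then have e: "{i\<in>{0..n}. n - i = i} = {}" using False by (auto, metis dvd_triv_left)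
    show ?thesis unfolding e using False by (simp add: dil_nth)
  qed
  finally show "(f ^ 2) $ n = dil 2 f $ n" .
qed



lemma fps_bit_add_self [simp]: "(f::bit fps) + f = 0"
  by (rule fps_ext) (simp only: fps_add_nth bit_add_self fps_zero_nth)

lemma fps_bit_add_cancel: "(f::bit fps) + (f + g) = g"
  by (metis add.assoc add_0 fps_bit_add_self)

lemma bit_minus_eq: "(a::bit) - b = a + b"
proof -
  have "a - b = a - b + (b + b)" by simp
  also have "\<dots> = a + b" by (simp only: algebra_simps)
  finally show ?thesis .
qed

lemma fps_bit_minus_eq: "(f::bit fps) - g = f + g"
  by (rule fps_ext) (simp add: bit_minus_eq)

fun tri :: "nat \<Rightarrow> nat" where
  "tri 0 = 0"
| "tri (Suc k) = tri k + Suc k"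

lemma two_tri: "2 * tri k = k * (k + 1)"
  by (induction k) (simp_all add: algebra_simps)

lemma tri_mono: "j < k \<Longrightarrow> tri j < tri k"
proof (induction k)
  case (Suc k) then show ?case by (cases "j = k") auto
qed simp

lemma tri_inj: "tri j = tri k \<Longrightarrow> j = k"
  by (metis linorder_neqE_nat nat_less_le tri_mono)

lemma tri_ge: "k \<le> tri k"
  by (induction k) auto

definition Q :: "nat \<Rightarrow> nat \<Rightarrow> bit fps" where
  "Q a b = (\<Prod>j\<in>{a..b}. 1 + fps_X ^ j)"

definition Sh :: "nat \<Rightarrow> bit fps" where
  "Sh n = (\<Sum>k\<in>{0..n}. fps_X ^ (tri k + n * k) * Q (Suc k) n)"

lemma Q_split_left: "k \<le> n \<Longrightarrow> Q k n = (1 + fps_X ^ k) * Q (Suc k) n"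
  unfolding Q_def by (simp add: prod.atLeast_Suc_atMost)

lemma Q_split_right: "k \<le> Suc n \<Longrightarrow> Q k (Suc n) = Q k n * (1 + fps_X ^ Suc n)"
  unfolding Q_def by (simp add: prod.nat_ivl_Suc')

lemma Q_empty: "n < k \<Longrightarrow> Q k n = 1"
  unfolding Q_def by simp

lemma Sh_term:
  assumes "k \<le> n"
  shows "fps_X ^ (tri k + Suc n * k) * Q (Suc k) (Suc n)
     = fps_X ^ (tri k + n * k) * Q (Suc k) n
       + (fps_X ^ (tri k + n * k) * Q k n + fps_X ^ (tri (Suc k) + n * Suc k) * Q (Suc k) n)"
proof -
  define u where "u = (fps_X ^ (tri k + n * k) :: bit fps)"
  define R where "R = Q (Suc k) n"
  have e1: "Q (Suc k) (Suc n) = R * (1 + fps_X ^ Suc n)"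
    using assms by (simp add: Q_split_right R_def)
  have e2: "Q k n = (1 + fps_X ^ k) * R" using assms by (simp add: Q_split_left R_def)
  have e3: "(fps_X ^ (tri k + Suc n * k) :: bit fps) = u * fps_X ^ k"
    by (simp add: u_def power_add[symmetric] algebra_simps)
  have e4: "(fps_X ^ (tri (Suc k) + n * Suc k) :: bit fps) = u * fps_X ^ (k + Suc n)"
    by (simp add: u_def power_add[symmetric] algebra_simps)
  have "u * fps_X ^ k * (R * (1 + fps_X ^ Suc n))
      = u * R + (u * ((1 + fps_X ^ k) * R) + u * fps_X ^ (k + Suc n) * R)"
  proof -
    have "u * ((1 + fps_X ^ k) * R) = u * R + u * fps_X ^ k * R" by (simp add: algebra_simps)
    then have "u * R + (u * ((1 + fps_X ^ k) * R) + u * fps_X ^ (k + Suc n) * R)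
       = u * fps_X ^ k * R + u * fps_X ^ (k + Suc n) * R"
      by (simp add: add.assoc[symmetric])
    also have "\<dots> = u * fps_X ^ k * (R * (1 + fps_X ^ Suc n))"
      by (simp add: algebra_simps power_add)
    finally show ?thesis by simp
  qed
  then show ?thesis using e1 e2 e3 e4 by (simp add: u_def R_def)
qed

lemma Sh_Suc: "Sh (Suc n) = Sh n + fps_X ^ (tri (Suc n) + n * Suc n) + fps_X ^ (tri (Suc n) + Suc n * Suc n)"
proof -
  define C where "C k = (fps_X ^ (tri k + n * k) * Q k n :: bit fps)" for k
  have z: "(1::bit fps) + fps_X ^ 0 = 0" using fps_bit_add_self[of 1] by (simp only: power_0)
  have "(\<Prod>j\<in>{0..n}. (1::bit fps) + fps_X ^ j) = 0"
  proof (rule prod_zero)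
    show "\<exists>a\<in>{0..n}. (1::bit fps) + fps_X ^ a = 0"
    proof (rule bexI[where x=0])
      show "(1::bit fps) + fps_X ^ 0 = 0" by (rule z)
    qed simp
  qed simp
  then have C0: "C 0 = 0" unfolding C_def Q_def by simp
  have Cn: "C (Suc n) = fps_X ^ (tri (Suc n) + n * Suc n)" unfolding C_def by (simp add: Q_empty)
  have "Sh (Suc n) = (\<Sum>k<Suc n. fps_X ^ (tri k + Suc n * k) * Q (Suc k) (Suc n))
        + fps_X ^ (tri (Suc n) + Suc n * Suc n) * Q (Suc (Suc n)) (Suc n)"
    unfolding Sh_def by (simp add: atLeast0AtMost lessThan_Suc_atMost[symmetric])
  also have "(\<Sum>k<Suc n. fps_X ^ (tri k + Suc n * k) * Q (Suc k) (Suc n))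
     = (\<Sum>k<Suc n. fps_X ^ (tri k + n * k) * Q (Suc k) n + (C k + C (Suc k)))"
  proof (rule sum.cong[OF refl])
    fix k assume "k \<in> {..<Suc n}"
    then have "k \<le> n" by simp
    from Sh_term[OF this] show "fps_X ^ (tri k + Suc n * k) * Q (Suc k) (Suc n)
      = fps_X ^ (tri k + n * k) * Q (Suc k) n + (C k + C (Suc k))"
      unfolding C_def .
  qed
  also have "\<dots> = Sh n + (\<Sum>k<Suc n. C (Suc k) - C k)"
    unfolding Sh_def fps_bit_minus_eq sum.distrib by (simp add: atLeast0AtMost lessThan_Suc_atMost add.commute)
  also have "(\<Sum>k<Suc n. C (Suc k) - C k) = C (Suc n) - C 0" by (rule sum_lessThan_telescope)
  finally show ?thesis using C0 Cn by (simp add: Q_empty)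
qed



lemma tri_3a: "tri (3*n+2) = 3*(tri (Suc n) + n * Suc n)"
proof -
  have a: "2*tri(3*n+2) = (3*n+2)*(3*n+2+1)" by (rule two_tri)
  have b: "2*tri(Suc n) = Suc n * (Suc n + 1)" by (rule two_tri)
  have "2*tri(3*n+2) = 2*(3*(tri (Suc n) + n * Suc n))"
    unfolding a using b by (simp add: algebra_simps del: tri.simps)
  then show ?thesis by simp
qed

lemma tri_3b: "tri (3*n+3) = 3*(tri (Suc n) + Suc n * Suc n)"
proof -
  have e: "3*n+3 = Suc (3*n+2)" by simp
  have "tri (3*n+3) = tri (3*n+2) + Suc (3*n+2)" unfolding e by (rule tri.simps(2))
  then show ?thesis using tri_3a[of n] by (simp add: algebra_simps del: tri.simps)
qed

lemma tri_3c: "tri (3*n+1) + (3*n+2) = 3*(tri (Suc n) + n * Suc n)"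
proof -
  have e: "3*n+2 = Suc (3*n+1)" by simp
  have "tri (3*n+2) = tri (3*n+1) + Suc (3*n+1)" unfolding e by (rule tri.simps(2))
  then show ?thesis using tri_3a[of n] by (simp del: tri.simps)
qed

lemma Sh_0: "Sh 0 = 1"
  by (simp add: Sh_def Q_def)

lemma Sh_nth: "Sh n $ i = (if \<exists>j \<le> 3*n. tri j = 3*i then 1 else 0)"
proof (induction n arbitrary: i)
  case 0
  show ?case by (simp add: Sh_0)
next
  case (Suc n)
  define e1 where "e1 = tri (Suc n) + n * Suc n"
  define e2 where "e2 = tri (Suc n) + Suc n * Suc n"
  have t2: "tri (3*n+2) = 3*e1" unfolding e1_def by (rule tri_3a)
  have t3: "tri (3*n+3) = 3*e2" unfolding e2_def by (rule tri_3b)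
  have t1: "tri (3*n+1) + (3*n+2) = 3*e1" unfolding e1_def by (rule tri_3c)
  have e12: "e2 = e1 + Suc n" unfolding e1_def e2_def by simp
  have sS: "Sh (Suc n) = Sh n + fps_X ^ e1 + fps_X ^ e2"
    unfolding e1_def e2_def by (rule Sh_Suc)
  have "Sh (Suc n) $ i = Sh n $ i + (if i = e1 then 1 else 0) + (if i = e2 then 1 else 0)"
    unfolding sS by simp
  also have "\<dots> = (if \<exists>j \<le> 3*Suc n. tri j = 3*i then 1 else 0)"
  proof (cases "\<exists>j \<le> 3*n. tri j = 3*i")
    case True
    then obtain j where j: "j \<le> 3*n" "tri j = 3*i" by auto
    have "tri j < tri (3*n+2)" using j(1) by (intro tri_mono) simp
    then have "i < e1" using j t2 by simp
    then have "i \<noteq> e1" "i \<noteq> e2" using e12 by auto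
    moreover have "\<exists>j \<le> 3*Suc n. tri j = 3*i" using j by (intro exI[of _ j]) simp
    ultimately show ?thesis using True Suc.IH by simp
  next
    case False
    have iff: "(\<exists>j \<le> 3*Suc n. tri j = 3*i) \<longleftrightarrow> (tri (3*n+1) = 3*i \<or> tri (3*n+2) = 3*i \<or> tri (3*n+3) = 3*i)"
    proof
      assume "\<exists>j \<le> 3*Suc n. tri j = 3*i"
      then obtain j where j: "j \<le> 3*Suc n" "tri j = 3*i" by auto
      then have "\<not> j \<le> 3*n" using False by auto
      then have "j = 3*n+1 \<or> j = 3*n+2 \<or> j = 3*n+3" using j(1) by arith
      then show "tri (3*n+1) = 3*i \<or> tri (3*n+2) = 3*i \<or> tri (3*n+3) = 3*i" using j by auto
    next
      assume "tri (3*n+1) = 3*i \<or> tri (3*n+2) = 3*i \<or> tri (3*n+3) = 3*i"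
      moreover have "3*n+1 \<le> 3*Suc n" "3*n+2 \<le> 3*Suc n" "3*n+3 \<le> 3*Suc n" by simp_all
      ultimately show "\<exists>j \<le> 3*Suc n. tri j = 3*i" by blast
    qed
    have "\<forall>a b c::nat. a + (3*n+2) = 3*c \<longrightarrow> a \<noteq> 3*b" by presburger
    then have n1: "tri (3*n+1) \<noteq> 3*i" using t1 by blast
    have "(tri (3*n+2) = 3*i) = (i = e1)" "(tri (3*n+3) = 3*i) = (i = e2)" using t2 t3 by auto
    moreover have sn: "Sh n $ i = 0" using Suc.IH False by simp
    moreover have "\<not> (i = e1 \<and> i = e2)" using e12 by auto
    ultimately show ?thesis using iff n1 by (auto simp del: tri.simps)
  qed
  finally show ?case .
qed



definition psi :: "bit fps" where
  "psi = Abs_fps (\<lambda>i. if \<exists>j. tri j = i then 1 else 0)"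

definition aa :: "bit fps" where
  "aa = Abs_fps (\<lambda>i. psi $ (3*i))"

lemma Q_nth_small:
  assumes "i \<le> n"
  shows "Q 1 n $ i = Sh n $ i"
proof -
  have "Sh n $ i = (\<Sum>k\<in>{0..n}. (fps_X ^ (tri k + n * k) * Q (Suc k) n) $ i)"
    unfolding Sh_def by (simp add: fps_sum_nth)
  also have "\<dots> = (fps_X ^ (tri 0 + n * 0) * Q (Suc 0) n) $ i
      + (\<Sum>k\<in>{Suc 0..n}. (fps_X ^ (tri k + n * k) * Q (Suc k) n) $ i)"
    by (simp add: sum.atLeast_Suc_atMost del: tri.simps)
  also have "(\<Sum>k\<in>{Suc 0..n}. (fps_X ^ (tri k + n * k) * Q (Suc k) n) $ i) = 0"
  proof (rule sum.neutral, clarify)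
    fix k assume k: "k \<in> {Suc 0..n}"
    then have "1 \<le> tri k" using tri_ge[of k] by simp
    moreover have "n \<le> n * k" using k by simp
    ultimately have "i < tri k + n * k" using assms by linarith
    then show "(fps_X ^ (tri k + n * k) * Q (Suc k) n) $ i = 0"
      by (simp add: fps_X_power_mult_nth)
  qed
  finally show ?thesis by simp
qed

lemma Q_nth:
  assumes "i \<le> n"
  shows "Q 1 n $ i = (if \<exists>j. tri j = 3*i then 1 else 0)"
proof -
  have "(\<exists>j \<le> 3*n. tri j = 3*i) = (\<exists>j. tri j = 3*i)"
    using assms tri_ge by (metis le_trans mult_le_mono2)
  then show ?thesis using Q_nth_small[OF assms] Sh_nth[of n i] by simp
qed

lemma dil_prod: "0 < k \<Longrightarrow> dil k (prod F S) = prod (\<lambda>i. dil k (F i :: 'a::comm_ring_1 fps)) S"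
  by (induction S rule: infinite_finite_induct) (simp_all add: dil_mult)

lemma dil_X_power: "0 < k \<Longrightarrow> dil k (fps_X ^ j :: 'a::comm_ring_1 fps) = fps_X ^ (k * j)"
  by (rule fps_ext) (auto simp: dil_nth)

lemma hm_qpoch_nth: "hm (qpoch k) $ n = (\<Prod>j\<in>{1..n}. 1 + fps_X ^ (k*j) :: bit fps) $ n"
proof -
  have "hm (qpoch k) $ n = hm (\<Prod>j\<in>{1..n}. 1 - fps_X ^ (k*j)) $ n"
    by (simp add: qpoch_def)
  also have "hm (\<Prod>j\<in>{1..n}. 1 - fps_X ^ (k*j)) = (\<Prod>j\<in>{1..n}. 1 + fps_X ^ (k*j))"
    by (simp add: hm_prod hm_diff hm_power fps_bit_minus_eq)
  finally show ?thesis .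
qed

lemma hm_qpoch: "0 < k \<Longrightarrow> hm (qpoch k) = dil k aa"
proof (rule fps_ext)
  fix n assume k: "0 < k"
  have "(\<Prod>j\<in>{1..n}. 1 + fps_X ^ (k*j) :: bit fps) = dil k (Q 1 n)"
    unfolding Q_def using k by (simp add: dil_prod dil_add dil_X_power)
  then have "hm (qpoch k) $ n = dil k (Q 1 n) $ n" using hm_qpoch_nth[of k n] by (simp only:)
  also have "\<dots> = dil k aa $ n"
  proof (cases "k dvd n")
    case True
    have "n div k \<le> n" by simp
    from Q_nth[OF this] have "Q 1 n $ (n div k) = (if \<exists>j. tri j = 3*(n div k) then 1 else 0)" .
    then show ?thesis using True by (simp add: dil_nth aa_def psi_def)
  qed (simp add: dil_nth)
  finally show "hm (qpoch k) $ n = dil k aa $ n" .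
qed

lemma dil_1 [simp]: "dil 1 f = f"
  by (rule fps_ext) (simp add: dil_nth)

lemma hm_qpoch1: "hm (qpoch 1) = aa"
  using hm_qpoch[of 1] dil_1 by (simp only: zero_less_one)



definition sg :: "int \<times> int \<Rightarrow> int \<times> int" where
  "sg p = (case p of (x,y) \<Rightarrow> if 4 dvd (x - y) then (\<bar>x - 3*y\<bar> div 2, (x+y) div 2)
                                   else ((x+3*y) div 2, \<bar>x - y\<bar> div 2))"

lemma sg_A: "4 dvd (x - y) \<Longrightarrow> x - 3*y = 2*u \<Longrightarrow> x + y = 2*v \<Longrightarrow> sg (x,y) = (\<bar>u\<bar>, v)"
  unfolding sg_def by (simp add: abs_mult)

lemma sg_B: "\<not> 4 dvd (x - y) \<Longrightarrow> x + 3*y = 2*u \<Longrightarrow> x - y = 2*v \<Longrightarrow> sg (x,y) = (u, \<bar>v\<bar>)"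
  unfolding sg_def by (simp add: abs_mult)

lemma oddE4:
  assumes "odd (x::int)" "odd y"
  obtains t where "x = y + 4*t" "4 dvd (x - y)" | t where "x = y + 4*t + 2" "\<not> 4 dvd (x - y)"
proof -
  obtain a b where "x = 2*a+1" "y = 2*b+1" using assms by (metis oddE)
  show ?thesis
  proof (cases "even (a - b)")
    case True
    then obtain t where "a - b = 2*t" by (metis evenE)
    then have "x = y + 4*t" using \<open>x = 2*a+1\<close> \<open>y = 2*b+1\<close> by simp
    then show ?thesis using that(1) by simp
  next
    case False
    then obtain t where "a - b = 2*t+1" by (metis oddE)
    then have "x = y + 4*t + 2" using \<open>x = 2*a+1\<close> \<open>y = 2*b+1\<close> by simp
    moreover have "\<not> 4 dvd (4*t+2::int)" by presburger
    ultimately show ?thesis using that(2) by simp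
  qed
qed

lemma sg_inv:
  assumes "odd x" "odd y" "0 < x" "0 < y"
  shows "sg (sg (x,y)) = (x,y)"
proof -
  obtain s where s: "y = 2*s+1" using assms(2) by (metis oddE)
  from oddE4[OF assms(1,2)] show ?thesis
  proof cases
    case (1 t)
    have e: "sg (x,y) = (\<bar>2*t - y\<bar>, 2*t + y)" by (rule sg_A) (use 1 in simp_all)
    show ?thesis
    proof (cases "2*t - y \<ge> 0")
      case True
      have nd: "\<not> 4 dvd ((2*t - y) - (2*t + y))" using s by presburger
      have "sg (2*t - y, 2*t + y) = (4*t + y, \<bar>- y\<bar>)" by (rule sg_B[OF nd]) simp_all
      then show ?thesis using e True 1 assms by simp
    next
      case False
      have nd: "4 dvd ((y - 2*t) - (2*t + y))" by simp
      have "sg (y - 2*t, 2*t + y) = (\<bar>-4*t - y\<bar>, y)" by (rule sg_A[OF nd]) simp_all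
      then show ?thesis using e False 1 assms by simp
    qed
  next
    case (2 t)
    have e: "sg (x,y) = (2*y + 2*t + 1, \<bar>2*t + 1\<bar>)" by (rule sg_B) (use 2 in simp_all)
    show ?thesis
    proof (cases "2*t + 1 \<ge> 0")
      case True
      have nd: "\<not> 4 dvd ((2*y + 2*t + 1) - (2*t + 1))" using s by presburger
      have "sg (2*y + 2*t + 1, 2*t + 1) = (y + 4*t + 2, \<bar>y\<bar>)" by (rule sg_B[OF nd]) simp_all
      then show ?thesis using e True 2 assms by simp
    next
      case False
      have nd: "4 dvd ((2*y + 2*t + 1) - (-2*t - 1))" using s by presburger
      have "sg (2*y + 2*t + 1, -2*t - 1) = (\<bar>y + 4*t + 2\<bar>, y)" by (rule sg_A[OF nd]) simp_all
      then show ?thesis using e False 2 assms by simp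
    qed
  qed
qed

lemma form_A: "2*u = x - 3*y \<Longrightarrow> 2*v = x + y \<Longrightarrow> u^2 + 3*v^2 = x^2 + 3*(y::int)^2"
proof -
  assume a: "2*u = x - 3*y" and b: "2*v = x + y"
  have "4*(u^2 + 3*v^2) = (2*u)^2 + 3*(2*v)^2" by (simp add: power2_eq_square)
  also have "\<dots> = 4*(x^2 + 3*y^2)" unfolding a b by (simp add: power2_eq_square algebra_simps)
  finally show ?thesis by simp
qed

lemma form_B: "2*u = x + 3*y \<Longrightarrow> 2*v = x - y \<Longrightarrow> u^2 + 3*v^2 = x^2 + 3*(y::int)^2"
proof -
  assume a: "2*u = x + 3*y" and b: "2*v = x - y"
  have "4*(u^2 + 3*v^2) = (2*u)^2 + 3*(2*v)^2" by (simp add: power2_eq_square)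
  also have "\<dots> = 4*(x^2 + 3*y^2)" unfolding a b by (simp add: power2_eq_square algebra_simps)
  finally show ?thesis by simp
qed

lemma sg_props:
  assumes "odd x" "odd y" "0 < x" "0 < y" "sg (x,y) = (x',y')"
  shows "odd x' \<and> odd y' \<and> 0 < x' \<and> 0 < y' \<and> x'^2 + 3*y'^2 = x^2 + 3*y^2
         \<and> ((x',y') = (x,y) \<longleftrightarrow> x = y \<or> x = 3*y)"
proof -
  obtain s where s: "y = 2*s+1" using assms(2) by (metis oddE)
  from oddE4[OF assms(1,2)] show ?thesis
  proof cases
    case (1 t)
    have e: "sg (x,y) = (\<bar>2*t - y\<bar>, 2*t + y)" by (rule sg_A) (use 1 in simp_all)
    then have x': "x' = \<bar>2*t - y\<bar>" and y': "y' = 2*t + y" using assms(5) by simp_all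
    have f: "(2*t - y)^2 + 3*(2*t+y)^2 = x^2 + 3*y^2" by (rule form_A) (use 1 in simp_all)
    have "odd x'" "odd y'" "0 < x'" "0 < y'" unfolding x' y' using s 1 assms(3,4) by presburger+
    moreover have "x'^2 + 3*y'^2 = x^2 + 3*y^2" unfolding x' y' using f by simp
    moreover have "((x',y') = (x,y) \<longleftrightarrow> x = y \<or> x = 3*y)"
      unfolding x' y' using 1 s assms(3,4) by (auto simp: abs_if)
    ultimately show ?thesis by blast
  next
    case (2 t)
    have e: "sg (x,y) = (2*y + 2*t + 1, \<bar>2*t + 1\<bar>)" by (rule sg_B) (use 2 in simp_all)
    then have x': "x' = 2*y + 2*t + 1" and y': "y' = \<bar>2*t + 1\<bar>" using assms(5) by simp_all
    have f: "(2*y + 2*t + 1)^2 + 3*(2*t+1)^2 = x^2 + 3*y^2" by (rule form_B) (use 2 in simp_all)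
    have "odd x'" "odd y'" "0 < x'" "0 < y'" unfolding x' y' using s 2 assms(3,4) by presburger+
    moreover have "x'^2 + 3*y'^2 = x^2 + 3*y^2" unfolding x' y' using f by simp
    moreover have "((x',y') = (x,y) \<longleftrightarrow> x = y \<or> x = 3*y)"
      unfolding x' y' using 2 s assms(3,4) by (auto simp: abs_if)
    ultimately show ?thesis by blast
  qed
qed



lemma sq_tri: "(2 * int j + 1)^2 = 8 * int (tri j) + 1"
proof -
  have "int (2 * tri j) = int (j * (j+1))" using two_tri[of j] by simp
  then have "2 * int (tri j) = int j * (int j + 1)" by (simp add: algebra_simps)
  then show ?thesis by (simp add: power2_eq_square algebra_simps)
qed

definition Rp :: "nat \<Rightarrow> (nat \<times> nat) set" where
  "Rp m = {(j,k). tri j + 3 * tri k = m}"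

definition phi :: "nat \<times> nat \<Rightarrow> int \<times> int" where
  "phi p = (2 * int (fst p) + 1, 2 * int (snd p) + 1)"

lemma inj_phi: "inj phi"
  unfolding phi_def inj_on_def by auto

lemma finite_Rp: "finite (Rp m)"
proof (rule finite_subset)
  show "Rp m \<subseteq> {0..m} \<times> {0..m}"
  proof
    fix p assume p: "p \<in> Rp m"
    obtain j k where pjk: "p = (j,k)" by fastforce
    from p have e: "tri j + 3 * tri k = m" by (simp add: Rp_def pjk)
    have "j \<le> m" using tri_ge[of j] e by linarith
    moreover have "k \<le> m" using tri_ge[of k] e by linarith
    ultimately show "p \<in> {0..m} \<times> {0..m}" by (simp add: pjk)
  qed
qed simp

lemma mem_R:
  "(x,y) \<in> phi ` Rp m \<longleftrightarrow> odd x \<and> odd y \<and> 0 < x \<and> 0 < y \<and> x^2 + 3*y^2 = 8 * int m + 4"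
proof
  assume "(x,y) \<in> phi ` Rp m"
  then obtain j k where jk: "tri j + 3 * tri k = m" "x = 2 * int j + 1" "y = 2 * int k + 1"
    unfolding Rp_def phi_def by auto
  have "x^2 + 3*y^2 = 8 * int (tri j + 3 * tri k) + 4" unfolding jk(2,3) sq_tri by simp
  then show "odd x \<and> odd y \<and> 0 < x \<and> 0 < y \<and> x^2 + 3*y^2 = 8 * int m + 4"
    using jk by simp
next
  assume a: "odd x \<and> odd y \<and> 0 < x \<and> 0 < y \<and> x^2 + 3*y^2 = 8 * int m + 4"
  then obtain a b where ab: "x = 2*a+1" "y = 2*b+1" by (metis oddE)
  then have "0 \<le> a" "0 \<le> b" using a by auto
  define j where "j = nat a"
  define k where "k = nat b"
  have xj: "x = 2 * int j + 1" and yk: "y = 2 * int k + 1" using ab \<open>0 \<le> a\<close> \<open>0 \<le> b\<close> by (simp_all add: j_def k_def)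
  have "8 * int (tri j + 3 * tri k) + 4 = 8 * int m + 4"
    using a unfolding xj yk sq_tri by simp
  then have "tri j + 3 * tri k = m" by simp
  then show "(x,y) \<in> phi ` Rp m"
    unfolding Rp_def phi_def using xj yk by (auto intro!: image_eqI[of _ _ "(j,k)"])
qed

lemma card_R_parity: "(of_nat (card (Rp m)) :: bit) = of_nat (card {p \<in> phi ` Rp m. sg p = p})"
proof -
  have "(of_nat (card (Rp m)) :: bit) = of_nat (card (phi ` Rp m))"
    using inj_phi by (simp add: card_image inj_on_subset)
  also have "\<dots> = (\<Sum>p\<in>phi ` Rp m. (1::bit))" by simp
  also have "\<dots> = (\<Sum>p\<in>{p \<in> phi ` Rp m. sg p = p}. (1::bit))"
  proof (rule sum_involution_bit)
    show "finite (phi ` Rp m)" using finite_Rp by simp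
  next
    fix p assume p: "p \<in> phi ` Rp m"
    obtain x y where xy: "p = (x,y)" by fastforce
    obtain x' y' where s: "sg (x,y) = (x',y')" by fastforce
    have P: "odd x \<and> odd y \<and> 0 < x \<and> 0 < y \<and> x^2 + 3*y^2 = 8 * int m + 4"
      using p unfolding xy mem_R .
    then have "odd x'" "odd y'" "0 < x'" "0 < y'" "x'^2 + 3*y'^2 = x^2 + 3*y^2"
      using sg_props[OF _ _ _ _ s] by auto
    then show "sg p \<in> phi ` Rp m" unfolding xy s mem_R using P by simp
    show "sg (sg p) = p" unfolding xy using sg_inv P by simp
  qed simp
  also have "\<dots> = of_nat (card {p \<in> phi ` Rp m. sg p = p})" by simp
  finally show ?thesis .
qed



lemma tri_3k1: "tri (3*k+1) = 9 * tri k + 1"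
proof -
  have a: "2 * tri (3*k+1) = (3*k+1)*(3*k+1+1)" by (rule two_tri)
  have b: "2 * tri k = k*(k+1)" by (rule two_tri)
  have "2 * tri (3*k+1) = 2 * (9 * tri k + 1)"
    unfolding a using b by (simp add: algebra_simps del: tri.simps)
  then show ?thesis by simp
qed

lemma tri_3k1': "tri (Suc (3*k)) = 9 * tri k + 1"
  using tri_3k1[of k] by simp

lemma bit_of_nat_if: "(of_nat (if P then 1 else 0) :: bit) = (if P then 1 else 0)"
  by simp

lemma fix_count:
  "(of_nat (card {p \<in> phi ` Rp m. sg p = p}) :: bit)
     = (if \<exists>j. 4 * tri j = m then 1 else 0) + (if \<exists>k. 12 * tri k + 1 = m then 1 else 0)"
proof -
  define F1 where "F1 = {q \<in> Rp m. fst q = snd q}"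
  define F2 where "F2 = {q \<in> Rp m. fst q = 3 * snd q + 1}"
  have fixset: "{p \<in> phi ` Rp m. sg p = p} = phi ` (F1 \<union> F2)"
  proof -
    have key: "sg (phi q) = phi q \<longleftrightarrow> (fst q = snd q \<or> fst q = 3 * snd q + 1)" for q
    proof -
      obtain j k where q: "q = (j,k)" by fastforce
      define x y where "x = 2 * int j + 1" and "y = 2 * int k + 1"
      obtain x' y' where s: "sg (x,y) = (x',y')" by fastforce
      have "(x',y') = (x,y) \<longleftrightarrow> x = y \<or> x = 3*y"
        using sg_props[OF _ _ _ _ s] unfolding x_def y_def by simp
      moreover have "(x = y \<or> x = 3*y) \<longleftrightarrow> (j = k \<or> j = 3 * k + 1)"
      proof -
        have e1: "(2*int j+1 = 2*int k+1) = (j = k)" by simp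
        have e2: "(2*int j+1 = 3*(2*int k+1)) = (j = 3*k+1)" by presburger
        show ?thesis unfolding x_def y_def e1 e2 ..
      qed
      ultimately show ?thesis using s unfolding q phi_def x_def y_def by simp
    qed
    have g: "{p \<in> phi ` Rp m. sg p = p} = phi ` {q \<in> Rp m. sg (phi q) = phi q}" by (simp add: image_Collect_subsetI Collect_conj_eq image_def) blast
    have "{q \<in> Rp m. sg (phi q) = phi q} = F1 \<union> F2"
      unfolding F1_def F2_def key by blast
    then show ?thesis using g by simp
  qed
  have fin: "finite F1" "finite F2" using finite_Rp by (auto simp: F1_def F2_def)
  have disj: "F1 \<inter> F2 = {}" by (auto simp: F1_def F2_def)
  have "card {p \<in> phi ` Rp m. sg p = p} = card F1 + card F2"
    unfolding fixset using inj_phi fin disj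
    by (simp add: card_image inj_on_subset card_Un_disjoint)
  moreover have "card F1 = (if \<exists>j. 4 * tri j = m then 1 else 0)"
  proof (cases "\<exists>j. 4 * tri j = m")
    case True
    then obtain j0 where j0: "4 * tri j0 = m" by auto
    have "F1 = {(j0,j0)}"
    proof
      show "F1 \<subseteq> {(j0,j0)}"
      proof
        fix q assume "q \<in> F1"
        then obtain j where q: "q = (j,j)" "4 * tri j = m" unfolding F1_def Rp_def
          by (cases q) auto
        then have "tri j = tri j0" using j0 by simp
        then have "j = j0" by (rule tri_inj)
        then show "q \<in> {(j0,j0)}" using q by simp
      qed
      show "{(j0,j0)} \<subseteq> F1" using j0 unfolding F1_def Rp_def by simp
    qed
    then show ?thesis using True by simp
  next
    case False
    then have "F1 = {}" unfolding F1_def Rp_def by auto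
    then show ?thesis using False by simp
  qed
  moreover have "card F2 = (if \<exists>k. 12 * tri k + 1 = m then 1 else 0)"
  proof (cases "\<exists>k. 12 * tri k + 1 = m")
    case True
    then obtain k0 where k0: "12 * tri k0 + 1 = m" by auto
    have "F2 = {(3*k0+1,k0)}"
    proof
      show "F2 \<subseteq> {(3*k0+1,k0)}"
      proof
        fix q assume "q \<in> F2"
        then obtain k where q: "q = (3*k+1,k)" "tri (3*k+1) + 3 * tri k = m" unfolding F2_def Rp_def
          by (cases q) auto
        then have "12 * tri k + 1 = m" by (simp add: tri_3k1 tri_3k1' del: tri.simps)
        then have "tri k = tri k0" using k0 by simp
        then have "k = k0" by (rule tri_inj)
        then show "q \<in> {(3*k0+1,k0)}" using q by simp
      qed
      show "{(3*k0+1,k0)} \<subseteq> F2" using k0 unfolding F2_def Rp_def by (simp add: tri_3k1 tri_3k1' del: tri.simps)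
    qed
    then show ?thesis using True by simp
  next
    case False
    have "F2 = {}"
    proof -
      have "q \<notin> F2" for q
      proof
        assume "q \<in> F2"
        then obtain k where "tri (3*k+1) + 3 * tri k = m" unfolding F2_def Rp_def by (cases q) auto
        then have "12 * tri k + 1 = m" by (simp add: tri_3k1 tri_3k1' del: tri.simps)
        then show False using False by blast
      qed
      then show ?thesis by blast
    qed
    then show ?thesis using False by simp
  qed
  ultimately show ?thesis by (simp del: tri.simps)
qed

lemma lhs_coeff: "(psi * dil 3 psi) $ m = (of_nat (card (Rp m)) :: bit)"
proof -
  define I where "I = {i \<in> {0..m}. (\<exists>j. tri j = i) \<and> 3 dvd (m - i) \<and> (\<exists>k. tri k = (m - i) div 3)}"
  have "(psi * dil 3 psi) $ m = (\<Sum>i=0..m. psi $ i * dil 3 psi $ (m - i))"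
    by (simp add: fps_mult_nth)
  also have "\<dots> = (\<Sum>i=0..m. if i \<in> I then 1 else 0)"
    by (rule sum.cong[OF refl]) (auto simp: I_def psi_def dil_nth)
  also have "\<dots> = (\<Sum>i\<in>{i\<in>{0..m}. i \<in> I}. (1::bit))"
    by (rule sum.inter_filter[symmetric]) simp
  also have "{i\<in>{0..m}. i \<in> I} = I" by (auto simp: I_def)
  also have "(\<Sum>i\<in>I. (1::bit)) = of_nat (card I)" by simp
  also have "card I = card (Rp m)"
  proof -
    have "bij_betw (\<lambda>q. tri (fst q)) (Rp m) I"
    proof (rule bij_betwI')
      fix q q' assume q: "q \<in> Rp m" and q': "q' \<in> Rp m"
      show "(tri (fst q) = tri (fst q')) = (q = q')"
      proof
        assume e: "tri (fst q) = tri (fst q')"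
        then have "fst q = fst q'" by (rule tri_inj)
        moreover have "tri (snd q) = tri (snd q')" using q q' e unfolding Rp_def by auto
        then have "snd q = snd q'" by (rule tri_inj)
        ultimately show "q = q'" by (simp add: prod_eq_iff)
      qed simp
    next
      fix q assume "q \<in> Rp m"
      then obtain j k where q: "q = (j,k)" "tri j + 3 * tri k = m" unfolding Rp_def by auto
      then have "m - tri j = 3 * tri k" by simp
      then show "tri (fst q) \<in> I" unfolding I_def using q by auto
    next
      fix i assume "i \<in> I"
      then obtain j k where jk: "tri j = i" "i \<le> m" "3 dvd (m - i)" "tri k = (m - i) div 3"
        unfolding I_def by auto
      then have hj: "tri j + 3 * tri k = m" by auto
      show "\<exists>q\<in>Rp m. i = tri (fst q)"
        by (rule bexI[of _ "(j,k)"]) (use jk hj in \<open>auto simp: Rp_def\<close>)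
    qed
    then show ?thesis by (rule bij_betw_same_card[symmetric])
  qed
  finally show ?thesis .
qed

lemma rhs_coeff:
  "(dil 4 psi + fps_X * dil 12 psi) $ m
     = (if \<exists>j. 4 * tri j = m then 1 else 0) + (if \<exists>k. 12 * tri k + 1 = m then 1 else 0)"
proof -
  have "(\<exists>j. 4 * tri j = m) = (4 dvd m \<and> (\<exists>j. tri j = m div 4))"
  proof
    assume "\<exists>j. 4 * tri j = m"
    then obtain j where "4 * tri j = m" by blast
    then show "4 dvd m \<and> (\<exists>j. tri j = m div 4)" by auto
  next
    assume "4 dvd m \<and> (\<exists>j. tri j = m div 4)"
    then obtain j where "4 dvd m" "tri j = m div 4" by blast
    then have "4 * tri j = m" by simp
    then show "\<exists>j. 4 * tri j = m" by blast
  qed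
  then have a: "dil 4 psi $ m = (if \<exists>j. 4 * tri j = m then 1 else 0)"
    by (simp add: dil_nth psi_def del: tri.simps)
  have b: "(fps_X * dil 12 psi) $ m = (if \<exists>k. 12 * tri k + 1 = m then 1 else 0)"
  proof (cases m)
    case 0 then show ?thesis by simp
  next
    case (Suc m')
    have "(\<exists>k. 12 * tri k + 1 = m) = (12 dvd m' \<and> (\<exists>k. tri k = m' div 12))"
    proof
      assume "\<exists>k. 12 * tri k + 1 = m"
      then obtain k where "12 * tri k + 1 = m" by blast
      then show "12 dvd m' \<and> (\<exists>k. tri k = m' div 12)" using Suc by auto
    next
      assume "12 dvd m' \<and> (\<exists>k. tri k = m' div 12)"
      then obtain k where "12 dvd m'" "tri k = m' div 12" by blast
      then have "12 * tri k + 1 = m" using Suc by simp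
      then show "\<exists>k. 12 * tri k + 1 = m" by blast
    qed
    then show ?thesis using Suc by (simp add: dil_nth psi_def del: tri.simps)
  qed
  show ?thesis using a b by simp
qed

lemma identK: "psi * dil 3 psi = dil 4 psi + fps_X * dil 12 psi"
proof (rule fps_ext)
  fix m
  show "(psi * dil 3 psi) $ m = (dil 4 psi + fps_X * dil 12 psi) $ m"
    unfolding lhs_coeff rhs_coeff card_R_parity fix_count ..
qed



lemma psi0: "psi $ 0 = 1"
  by (auto simp: psi_def intro: exI[of _ 0])

lemma aa0: "aa $ 0 = 1"
  using psi0 by (simp add: aa_def)

lemma identA: "psi * aa = dil 4 aa"
proof (rule fps_ext)
  fix n
  have "(psi * dil 3 psi) $ (3*n) = (\<Sum>i=0..3*n. psi $ i * dil 3 psi $ (3*n - i))"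
    by (simp add: fps_mult_nth)
  also have "\<dots> = (\<Sum>i=0..3*n. if 3 dvd i then psi $ i * psi $ ((3*n - i) div 3) else 0)"
  proof (rule sum.cong[OF refl])
    fix i assume i: "i \<in> {0..3*n}"
    have "3 dvd (3*n - i) \<longleftrightarrow> 3 dvd i" using i by (simp add: dvd_diff_nat) presburger
    then show "psi $ i * dil 3 psi $ (3*n - i) = (if 3 dvd i then psi $ i * psi $ ((3*n - i) div 3) else 0)"
      by (simp add: dil_nth)
  qed
  also have "\<dots> = (\<Sum>i=0..n. psi $ (3*i) * psi $ ((3*n - 3*i) div 3))"
    by (rule sum_dvd_reindex) simp
  also have "\<dots> = (\<Sum>i=0..n. aa $ i * psi $ (n - i))"
    by (simp add: aa_def right_diff_distrib'[symmetric])
  also have "\<dots> = (aa * psi) $ n" by (simp add: fps_mult_nth)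
  finally have l: "(psi * dil 3 psi) $ (3*n) = (psi * aa) $ n" by (simp add: mult.commute)
  have r1: "dil 4 psi $ (3*n) = dil 4 aa $ n"
  proof (cases "4 dvd n")
    case True
    then obtain t where "n = 4*t" by (auto simp: dvd_def)
    then show ?thesis by (simp add: dil_nth aa_def)
  next
    case False
    then have "\<not> 4 dvd (3*n)" by presburger
    then show ?thesis using False by (simp add: dil_nth)
  qed
  have r2: "(fps_X * dil 12 psi) $ (3*n) = 0"
  proof (cases n)
    case (Suc n')
    have "\<not> 12 dvd (3*n - 1)" using Suc by presburger
    then show ?thesis using Suc by (simp add: dil_nth)
  qed simp
  have "(psi * aa) $ n = (psi * dil 3 psi) $ (3*n)" using l by (rule sym)
  also have "\<dots> = (dil 4 psi + fps_X * dil 12 psi) $ (3*n)" by (simp only: identK)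
  also have "\<dots> = dil 4 psi $ (3*n) + (fps_X * dil 12 psi) $ (3*n)" by (rule fps_add_nth)
  also have "\<dots> = dil 4 aa $ n" by (simp only: r1 r2 add_0_right)
  finally show "(psi * aa) $ n = dil 4 aa $ n" .
qed

lemma aa_pow4: "aa ^ 4 = dil 4 aa"
proof -
  have "aa ^ 4 = (aa ^ 2) ^ 2" by (simp add: power_mult[symmetric])
  also have "\<dots> = dil 2 (dil 2 aa)" by (simp add: frob)
  also have "\<dots> = dil 4 aa" by (simp add: dil_dil)
  finally show ?thesis .
qed

lemma psi_eq: "psi = aa ^ 3"
proof -
  have "aa * psi = aa * aa ^ 3"
    using identA aa_pow4 by (simp add: mult.commute power_Suc[symmetric] del: power_Suc)
  moreover have "aa \<noteq> 0" using aa0 by (metis fps_zero_nth zero_neq_one)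
  ultimately show ?thesis by simp
qed

lemma dil2_even: "dil 2 f $ (2*n) = f $ n"
  by (simp add: dil_nth)

lemma dil2_odd: "dil 2 f $ (2*n+1) = 0"
  by (simp add: dil_nth)

lemma Xdil2_even: "(fps_X * dil 2 (f::bit fps)) $ (2*n) = 0"
  by (cases n) (simp_all add: dil_nth)

lemma Xdil2_odd: "(fps_X * dil 2 (f::bit fps)) $ (2*n+1) = f $ n"
  by (simp add: dil_nth)

lemma split_even_odd:
  fixes F G :: "bit fps"
  shows "(dil 2 F + fps_X * dil 2 G) $ (2*n) = F $ n"
    and "(dil 2 F + fps_X * dil 2 G) $ (2*n+1) = G $ n"
  by (simp_all only: fps_add_nth dil2_even dil2_odd Xdil2_even Xdil2_odd) simp_all



lemma qpoch_0: "qpoch k $ 0 = 1"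
  by (simp add: qpoch_def)

lemma inv_sq_mult: "(f::bit fps) $ 0 \<noteq> 0 \<Longrightarrow> f * inverse f = 1"
  by (rule inverse_mult_eq_1')

lemma main_bit:
  "(\<forall>n. hm Fstar6_series $ (4*n) = (aa^3 * inverse ((dil 3 aa)^3)) $ n)
   \<and> (\<forall>n. hm Fstar6_series $ (8*n+2) = (aa^3) $ n)"
proof -
  define cc where "cc = aa ^ 3"
  define dd where "dd = dil 3 cc"
  define W where "W = cc * dd"
  define b where "b = dil 3 aa"
  have cc0: "cc $ 0 = 1" using aa0 by (simp add: cc_def fps_power_zeroth)
  have dd0: "dd $ 0 = 1" using cc0 by (simp add: dd_def dil_nth)
  have W0: "W $ 0 = 1" using cc0 dd0 by (simp add: W_def)
  have b0: "b $ 0 = 1" using aa0 by (simp add: b_def dil_nth)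
  have ccpsi: "cc = psi" by (simp add: cc_def psi_eq)
  have W_split: "W = dil 2 (dil 2 cc) + fps_X * dil 2 (dil 2 dd)"
    unfolding W_def dd_def ccpsi using identK by (simp add: dil_dil)
  define V where "V = inverse W"
  have WV: "W * V = 1" unfolding V_def using W0 by (simp add: inverse_mult_eq_1')
  have V_eq: "V = W * dil 2 V"
  proof -
    have "V = W * V * V" using WV by simp
    also have "\<dots> = W * V ^ 2" by (simp add: power2_eq_square mult.assoc)
    also have "V ^ 2 = dil 2 V" by (rule frob)
    finally show ?thesis .
  qed
  have V_split: "V = dil 2 (dil 2 cc * V) + fps_X * dil 2 (dil 2 dd * V)"
  proof -
    have "V = (dil 2 (dil 2 cc) + fps_X * dil 2 (dil 2 dd)) * dil 2 V"
      using V_eq W_split by simp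
    also have "\<dots> = dil 2 (dil 2 cc * V) + fps_X * dil 2 (dil 2 dd * V)"
      by (simp add: dil_mult algebra_simps)
    finally show ?thesis .
  qed
  have icc: "cc * inverse cc = 1" using cc0 by (simp add: inverse_mult_eq_1')
  have idd: "dd * inverse dd = 1" using dd0 by (simp add: inverse_mult_eq_1')
  have V_inv: "V = inverse cc * inverse dd" unfolding V_def W_def by (rule fps_inverse_mult)
  have E1: "dil 2 cc * V = cc * inverse dd"
  proof -
    have "dil 2 cc * V = cc * (cc * inverse cc) * inverse dd"
      by (simp add: frob[symmetric] V_inv power2_eq_square mult.assoc)
    then show ?thesis using icc by simp
  qed
  have E2: "dil 2 dd * V = dd * inverse cc"
  proof -
    have "dil 2 dd * V = dd * (dd * inverse dd) * inverse cc"
      by (simp add: frob[symmetric] V_inv power2_eq_square mult.assoc mult.left_commute)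
    then show ?thesis using idd by simp
  qed
  have E3: "dd * inverse cc = dil 2 cc + fps_X * dil 2 (dil 2 dd * inverse cc)"
  proof -
    have "dd * inverse cc = W * (inverse cc) ^ 2"
      unfolding W_def using icc by (simp add: power2_eq_square mult.assoc mult.left_commute)
    also have "(inverse cc) ^ 2 = dil 2 (inverse cc)" by (rule frob)
    also have "W * dil 2 (inverse cc) = dil 2 (dil 2 cc * inverse cc) + fps_X * dil 2 (dil 2 dd * inverse cc)"
      unfolding W_split by (simp add: dil_mult algebra_simps)
    also have "dil 2 cc * inverse cc = cc"
      using icc by (simp add: frob[symmetric] power2_eq_square mult.assoc)
    finally show ?thesis .
  qed
  have hmS: "hm Fstar6_series = dil 2 V"
  proof -
    have h26: "hm (qpoch 2 * qpoch 6) = aa ^ 2 * b ^ 2"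
      by (simp add: hm_mult hm_qpoch frob b_def dil_dil del: dil_1)
    have q26: "(qpoch 2 * qpoch 6) $ 0 = 1" by (simp add: qpoch_0)
    have "hm Fstar6_series = (hm (qpoch 1) * hm (qpoch 3) * hm (finv (qpoch 2 * qpoch 6))) ^ 6"
      unfolding Fstar6_series_def by (simp only: hm_power hm_mult)
    also have "\<dots> = (aa * b * inverse (aa ^ 2 * b ^ 2)) ^ 6"
      unfolding hm_finv[OF q26] h26 hm_qpoch1 hm_qpoch[of 3, simplified] b_def ..
    finally have "hm Fstar6_series = (aa * b * inverse (aa ^ 2 * b ^ 2)) ^ 6" .
    also have "aa * b * inverse (aa ^ 2 * b ^ 2) = inverse (aa * b)"
    proof -
      have p0: "(aa * b) $ 0 = 1" using aa0 b0 by simp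
      have "aa ^ 2 * b ^ 2 = (aa * b) ^ 2" by (simp add: power_mult_distrib)
      then have "inverse (aa ^ 2 * b ^ 2) = inverse (aa * b) ^ 2" by (simp only: fps_inverse_power)
      then have "aa * b * inverse (aa ^ 2 * b ^ 2) = (aa * b) * inverse (aa * b) * inverse (aa * b)"
        by (simp only: power2_eq_square mult.assoc)
      also have "(aa * b) * inverse (aa * b) = 1" using p0 by (simp add: inverse_mult_eq_1')
      finally show ?thesis by simp
    qed
    also have "inverse (aa * b) ^ 6 = inverse ((aa * b) ^ 6)" by (simp add: fps_inverse_power)
    also have "(aa * b) ^ 6 = W ^ 2"
      unfolding W_def dd_def cc_def b_def by (simp add: dil_power power_mult_distrib power_mult[symmetric])
    also have "W ^ 2 = dil 2 W" by (rule frob)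
    also have "inverse (dil 2 W) = dil 2 V" unfolding V_def using W0 by (simp add: dil_inverse)
    finally show ?thesis .
  qed
  have part1: "hm Fstar6_series $ (4*n) = (aa^3 * inverse ((dil 3 aa)^3)) $ n" for n
  proof -
    have "hm Fstar6_series $ (4*n) = V $ (2*n)"
      unfolding hmS using dil2_even[of V "2*n"] by simp
    also have "\<dots> = (dil 2 cc * V) $ n" by (subst V_split) (rule split_even_odd(1))
    also have "\<dots> = (cc * inverse dd) $ n" by (simp only: E1)
    also have "\<dots> = (aa^3 * inverse ((dil 3 aa)^3)) $ n"
      by (simp add: dd_def cc_def dil_power)
    finally show ?thesis .
  qed
  have part2: "hm Fstar6_series $ (8*n+2) = (aa^3) $ n" for n
  proof -
    have "hm Fstar6_series $ (8*n+2) = V $ (2*(2*n) + 1)"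
      unfolding hmS using dil2_even[of V "4*n+1"] by (simp add: algebra_simps)
    also have "\<dots> = (dil 2 dd * V) $ (2*n)" by (subst V_split) (rule split_even_odd(2))
    also have "\<dots> = (dd * inverse cc) $ (2*n)" by (simp add: E2)
    also have "\<dots> = cc $ n" using dil2_even[of cc n] Xdil2_even[of "dil 2 dd * inverse cc" n]
      by (subst E3) simp
    finally show ?thesis by (simp add: cc_def)
  qed
  show ?thesis using part1 part2 by blast
qed

theorem lemma3p8:
  shows "(\<forall>n. [Fstar6 (4 * n) = fps_nth (qpoch 1 ^ 3 * finv (qpoch 3 ^ 3)) n] (mod 2))
       \<and> (\<forall>n. [Fstar6 (8 * n + 2) = fps_nth (qpoch 1 ^ 3) n] (mod 2))"
proof -
  have r1: "hm (qpoch 1 ^ 3 * finv (qpoch 3 ^ 3)) = aa^3 * inverse ((dil 3 aa)^3)"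
  proof -
    have "(qpoch 3 ^ 3) $ 0 = 1" by (simp add: qpoch_0 fps_power_zeroth)
    then show ?thesis by (simp only: hm_mult hm_power hm_finv hm_qpoch1 hm_qpoch[of 3, simplified])
  qed
  have r2: "hm (qpoch 1 ^ 3) = aa^3" by (simp only: hm_power hm_qpoch1)
  show ?thesis
  proof (intro conjI allI)
    fix n
    have "(of_int (Fstar6 (4*n)) :: bit) = hm Fstar6_series $ (4*n)" by (simp add: Fstar6_def)
    also have "\<dots> = hm (qpoch 1 ^ 3 * finv (qpoch 3 ^ 3)) $ n" using main_bit r1 by simp
    finally show "[Fstar6 (4 * n) = fps_nth (qpoch 1 ^ 3 * finv (qpoch 3 ^ 3)) n] (mod 2)"
      unfolding cong2_bit by simp
  next
    fix n
    have "(of_int (Fstar6 (8*n+2)) :: bit) = hm Fstar6_series $ (8*n+2)" by (simp add: Fstar6_def)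
    also have "\<dots> = hm (qpoch 1 ^ 3) $ n" using main_bit r2 by simp
    finally show "[Fstar6 (8 * n + 2) = fps_nth (qpoch 1 ^ 3) n] (mod 2)"
      unfolding cong2_bit by simp
  qed
qed


end
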